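(* For every odd integer $n\ge 3$ and every positive divisor $\lambda$ of $2n$, there exists a ${}^\lambda\mathrm{H}_{2n/\lambda}(n;3)$.
   Context: For positive integers $m,n,s,k,\lambda,t$ with $t$ dividing $\frac{2nk}{\lambda}$, let $v=\frac{2nk}{\lambda}+t$ and $J$ the subgroup of $\mathbb{Z}_v$ of order $t$. A ${}^\lambda\mathrm{H}_t(m,n;s,k)$ is an $m\times n$ partially filled array with entries in $\mathbb{Z}_v$ such that: (a) each row has exactly $s$ and each column exactly $k$ filled cells; (b) the multiset $\{\pm x: x$ an entry of a filled cell$\}$ contains each element of $\mathbb{Z}_v\setminus J$ exactly $\lambda$ times and no element of $J$; (c) every row and every column sums to $0$ in $\mathbb{Z}_v$. When $m=n$ (so $s=k$) it is denoted ${}^\lambda\mathrm{H}_t(n;k)$. *)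

theory Defs
  imports "HOL-Library.Multiset"
begin

text \<open>A partially filled m x n array with entries in Z_v: entry (i,j) with i<m, j<n is
  either None (empty) or Some x with x a residue in {0..<v} representing an element of Z_v.\<close>

definition filled_cells :: "nat \<Rightarrow> nat \<Rightarrow> (nat \<Rightarrow> nat \<Rightarrow> nat option) \<Rightarrow> (nat \<times> nat) set" where
  "filled_cells m n A = {(i,j). i < m \<and> j < n \<and> A i j \<noteq> None}"

definition subgroup_J :: "nat \<Rightarrow> nat \<Rightarrow> nat set" where
  "subgroup_J v t = {g. g < v \<and> (v div t) dvd g}"

definition relative_heffter ::
  "nat \<Rightarrow> nat \<Rightarrow> nat \<Rightarrow> nat \<Rightarrow> nat \<Rightarrow> nat \<Rightarrow> (nat \<Rightarrow> nat \<Rightarrow> nat option) \<Rightarrow> bool" where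
  "relative_heffter lam t m n s k A \<longleftrightarrow>
     (let v = 2 * n * k div lam + t;
          F = filled_cells m n A;
          val = (\<lambda>(i,j). the (A i j));
          M = (\<Sum>c\<in>F. {# val c, (v - val c) mod v #})
      in 0 < m \<and> 0 < n \<and> 0 < s \<and> 0 < k \<and> 0 < lam \<and> 0 < t \<and>
         lam dvd 2 * n * k \<and> t dvd (2 * n * k div lam) \<and>
         (\<forall>c\<in>F. val c < v) \<and>
         (\<forall>i<m. card {j. j < n \<and> (i,j) \<in> F} = s) \<and>
         (\<forall>j<n. card {i. i < m \<and> (i,j) \<in> F} = k) \<and>
         (\<forall>g<v. count M g = (if g \<in> subgroup_J v t then 0 else lam)) \<and>
         (\<forall>i<m. (\<Sum>j\<in>{j. j < n \<and> (i,j) \<in> F}. val (i,j)) mod v = 0) \<and>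
         (\<forall>j<n. (\<Sum>i\<in>{i. i < m \<and> (i,j) \<in> F}. val (i,j)) mod v = 0))"

end

theory Submission
  imports Defs "HOL-Number_Theory.Number_Theory"
begin

lemma card_res:
  fixes r e d :: nat assumes "r < e"
  shows "card {i::nat. i < d*e \<and> i mod e = r} = d"
proof -
  have "{i::nat. i < d*e \<and> i mod e = r} = (\<lambda>k. r + k*e) ` {..<d}"
  proof (rule Set.set_eqI, rule iffI)
    fix i assume "i \<in> {i::nat. i < d*e \<and> i mod e = r}"
    then have i: "i < d*e" "r = i mod e" by auto
    have "i = r + (i div e) * e" using i by simp
    moreover have "i div e < d" using i assms
      by (metis less_mult_imp_div_less)
    ultimately show "i \<in> (\<lambda>k. r + k*e) ` {..<d}" by blast
  next
    fix i assume "i \<in> (\<lambda>k. r + k*e) ` {..<d}"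
    then obtain k where k: "k < d" "i = r + k*e" by auto
    then have "k + 1 \<le> d" by simp
    then have "(k+1)*e \<le> d*e" by (rule mult_right_mono) simp
    then have "r + k*e < d*e" using assms by simp
    moreover have "(r + k*e) mod e = r" using assms by simp
    ultimately show "i \<in> {i::nat. i < d*e \<and> i mod e = r}" using k by simp
  qed
  moreover have "inj_on (\<lambda>k. r + k*e) {..<d}" using assms
    by (intro inj_onI) simp
  ultimately show ?thesis by (simp add: card_image)
qed

lemma count_lin:
  fixes K e d :: nat and a c g :: int
  assumes "e > 0" "K > 0" "coprime c (int e)" "0 \<le> g" "g < int K * int e"
  shows "card {i::nat. i < d*e \<and> (a + int K * c * int i) mod (int K * int e) = g}
     = (if g mod int K = a mod int K then d else 0)"
proof (cases "g mod int K = a mod int K")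
  case False
  have "{i::nat. i < d*e \<and> (a + int K * c * int i) mod (int K * int e) = g} = {}"
  proof (rule ccontr)
    assume "{i::nat. i < d*e \<and> (a + int K * c * int i) mod (int K * int e) = g} \<noteq> {}"
    then obtain i where "(a + int K * c * int i) mod (int K * int e) = g" by auto
    then have "g mod int K = (a + int K * c * int i) mod int K"
      by (metis dvd_triv_left mod_mod_cancel)
    also have "\<dots> = a mod int K" by (metis mod_mult_self2 mult.assoc mult.commute)
    finally show False using False by simp
  qed
  then show ?thesis using False by simp
next
  case True
  obtain t where t: "g - a = int K * t"
    using True by (metis mod_eq_dvd_iff dvdE)
  obtain c' where c': "[c * c' = 1] (mod int e)"
    using cong_solve_coprime_int[OF assms(3)] by blast
  define r where "r = nat ((c' * t) mod int e)"
  have rl: "r < e" using assms(1) unfolding r_def by (simp add: nat_less_iff)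
  have eq: "(a + int K * c * int i) mod (int K * int e) = g \<longleftrightarrow> i mod e = r" for i
  proof -
    have "(a + int K * c * int i) mod (int K * int e) = g \<longleftrightarrow>
          int K * int e dvd (a + int K * c * int i) - g"
      using assms(4,5) by (metis mod_eq_dvd_iff mod_pos_pos_trivial)
    also have "(a + int K * c * int i) - g = int K * (c * int i - t)"
      using t by (simp add: algebra_simps)
    also have "int K * int e dvd int K * (c * int i - t) \<longleftrightarrow> int e dvd (c * int i - t)"
      using assms(2) by simp
    also have "\<dots> \<longleftrightarrow> int e dvd (int i - c' * t)"
    proof
      assume h: "int e dvd (c * int i - t)"
      have "int e dvd c' * (c * int i - t)" using h by simp
      moreover have "int e dvd (c * c' - 1) * int i"
        using c' by (simp add: cong_iff_dvd_diff)
      ultimately have "int e dvd c' * (c * int i - t) - (c * c' - 1) * int i"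
        by (rule dvd_diff)
      moreover have "c' * (c * int i - t) - (c * c' - 1) * int i = int i - c' * t"
        by (simp add: algebra_simps)
      ultimately show "int e dvd (int i - c' * t)" by simp
    next
      assume h: "int e dvd (int i - c' * t)"
      have "int e dvd c * (int i - c' * t)" using h by simp
      moreover have "int e dvd (c * c' - 1) * t"
        using c' by (simp add: cong_iff_dvd_diff)
      ultimately have "int e dvd c * (int i - c' * t) + (c * c' - 1) * t"
        by (rule dvd_add)
      moreover have "c * (int i - c' * t) + (c * c' - 1) * t = c * int i - t"
        by (simp add: algebra_simps)
      ultimately show "int e dvd (c * int i - t)" by simp
    qed
    also have "\<dots> \<longleftrightarrow> int i mod int e = (c' * t) mod int e"
      by (simp add: mod_eq_dvd_iff)
    also have "\<dots> \<longleftrightarrow> i mod e = r"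
      unfolding r_def using assms(1)
      by (metis nat_int of_nat_mod pos_mod_sign of_nat_0_less_iff int_nat_eq)
    finally show ?thesis .
  qed
  show ?thesis using True card_res[OF rl, of d] eq by simp
qed

lemma modlt2: "x < 2*n \<Longrightarrow> (x::nat) mod n = (if x < n then x else x - n)"
  by (simp add: le_mod_geq)
lemma offs: "i<n \<Longrightarrow> k<n \<Longrightarrow> ((i+k) mod n + n - i) mod n = (k::nat)"
  by (subst modlt2[of "i+k"], simp, subst modlt2, auto)
lemma offs2: "i<n \<Longrightarrow> j<n \<Longrightarrow> (i + (j+n-i) mod n) mod n = (j::nat)"
  by (subst modlt2[of "j+n-i"], simp, subst modlt2, auto)
lemma offs3: "j<n \<Longrightarrow> k<n \<Longrightarrow> (j + n - (j+n-k) mod n) mod n = (k::nat)"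
  by (subst modlt2[of "j+n-k"], simp, subst modlt2, auto)
lemma offs4: "j<n \<Longrightarrow> k<n \<Longrightarrow> ((j+n-k) mod n + k) mod n = (j::nat)"
  by (subst modlt2[of "j+n-k"], simp, subst modlt2, auto)
lemma a: "int v dvd 8 * int n \<Longrightarrow> int v dvd 8 * int (x mod n) - 8 * int x"
proof -
  assume h: "int v dvd 8 * int n"
  have "8 * int (x mod n) - 8 * int x = - (8 * int n) * int (x div n)"
  proof -
    have "x = x mod n + n * (x div n)" by simp
    then have "int x = int (x mod n) + int n * int (x div n)" by (metis of_nat_add of_nat_mult)
    then show ?thesis by (simp add: algebra_simps)
  qed
  then show ?thesis using h by simp
qed
lemma b: "(int g::int) mod 8 = 1 \<or> int g mod 8 = 7 \<or> int g mod 8 = 5 \<or> int g mod 8 = 3 \<or> int g mod 8 = 2 \<or> int g mod 8 = 6 \<longleftrightarrow> \<not> 4 dvd g"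
  by presburger
lemma count_lin2:
  fixes K e d n v g :: nat and a c :: int and f :: "nat \<Rightarrow> int"
  assumes "e>0" "K>0" "coprime c (int e)" "g < v" "v = K*e" "n = d*e"
    "\<And>i. f i = a + int K * c * int i"
  shows "card {i. i<n \<and> f i mod int v = int g} = (if int g mod int K = a mod int K then d else 0)"
proof -
  have iv: "int v = int K * int e" using assms(5) by simp
  show ?thesis unfolding assms(6,7) iv
    by (rule count_lin) (use assms in \<open>auto simp flip: of_nat_mult\<close>)
qed

definition hv :: "nat \<Rightarrow> int \<Rightarrow> nat" where "hv v z = nat (z mod int v)"

definition EE :: "nat \<Rightarrow> nat \<Rightarrow> int" where
  "EE k i = (if k = 0 then 1 + 8*int i else if k = 1 then -(6+16*int i) else 5 + 8*int i)"

definition AA :: "nat \<Rightarrow> nat \<Rightarrow> nat \<Rightarrow> nat \<Rightarrow> nat option" where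
  "AA n v i j = (if i<n \<and> j<n \<and> (j+n-i) mod n < 3 then Some (hv v (EE ((j+n-i) mod n) i)) else None)"

lemma count2: "count {#x, y#} g = of_bool (x = g) + of_bool (y = g)"
  by auto

lemma hv_neg: "v > 0 \<Longrightarrow> (v - hv v z) mod v = hv v (-z)"
proof -
  assume v: "v > 0"
  have le: "hv v z \<le> v" unfolding hv_def using v
    by (simp add: nat_le_iff order.strict_implies_order)
  have "int ((v - hv v z) mod v) = (int v - (z mod int v)) mod int v"
    using le v by (simp add: of_nat_mod of_nat_diff hv_def)
  also have "\<dots> = (-z) mod int v" by (simp add: mod_diff_right_eq[symmetric] mod_minus_eq)
  finally show ?thesis unfolding hv_def by (metis nat_int)
qed

lemma hv_eq: "v > 0 \<Longrightarrow> hv v z = g \<longleftrightarrow> z mod int v = int g"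
  unfolding hv_def by auto

lemma hv3: assumes "v > 0" "int v dvd (a+b+c)"
  shows "(hv v a + hv v b + hv v c) mod v = 0"
proof -
  have "int (hv v a + hv v b + hv v c) = a mod int v + b mod int v + c mod int v"
    unfolding hv_def using assms(1) by simp
  moreover have "(a mod int v + b mod int v + c mod int v) mod int v = (a+b+c) mod int v"
  proof -
    define m where "m = int v"
    have "(a mod m + b mod m + c mod m) mod m = ((a mod m + b mod m) mod m + c mod m) mod m"
      by (rule mod_add_left_eq[of "a mod m + b mod m" m "c mod m", symmetric])
    also have "\<dots> = ((a + b) mod m + c mod m) mod m" by (simp only: mod_add_eq)
    also have "\<dots> = (a+b+c) mod m" by (rule mod_add_eq)
    finally show ?thesis unfolding m_def .
  qed
  ultimately have "int (hv v a + hv v b + hv v c) mod int v = 0" using assms(2) by simp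
  then have "int v dvd int (hv v a + hv v b + hv v c)" by (simp add: dvd_eq_mod_eq_0)
  then have "v dvd (hv v a + hv v b + hv v c)" by (simp only: of_nat_dvd_iff)
  then show ?thesis by simp
qed

lemma sum3: "(\<Sum>k<(3::nat). f k) = f 0 + f 1 + (f 2 :: 'a::comm_monoid_add)"
  by (simp add: numeral_3_eq_3 numeral_2_eq_2 lessThan_Suc add_ac)

theorem proposition4:
  fixes n lam :: nat
  assumes "odd n" and "n \<ge> 3" and "lam > 0" and "lam dvd 2 * n"
  shows "\<exists>A. relative_heffter lam (2 * n div lam) n n 3 3 A"
proof -
  define w where "w = 2*n div lam"
  define v where "v = 2*n*3 div lam + w"
  have lw: "lam * w = 2*n" using assms(4) unfolding w_def by simp
  have v4: "v = 4*w"
  proof -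
    have "2*n*3 = lam * (3*w)" using lw by simp
    then have "2*n*3 div lam = 3*w" using assms(3) by simp
    then show ?thesis unfolding v_def by simp
  qed
  have wpos: "w > 0" using lw assms(2) by (cases w) auto
  have vpos: "v > 0" using v4 wpos by simp
  have vdvd: "int v dvd 8 * int n"
  proof -
    have "8 * n = v * lam" using v4 lw by (simp add: algebra_simps)
    then have "8 * int n = int v * int lam" by (metis of_nat_mult of_nat_numeral)
    then show ?thesis by simp
  qed
  define A where "A = AA n v"
  define F where "F = filled_cells n n A"
  define val where "val = (\<lambda>(i,j). the (A i j))"
  have Fmem: "(i,j) \<in> F \<longleftrightarrow> i<n \<and> j<n \<and> (j+n-i) mod n < 3" for i j
    unfolding F_def filled_cells_def A_def AA_def by auto
  have n3: "3 \<le> n" using assms(2) .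
  define \<phi> where "\<phi> = (\<lambda>(i,k). (i, (i+k) mod n))"
  have F_eq: "F = \<phi> ` ({..<n} \<times> {..<3})"
  proof (rule Set.set_eqI, rule iffI)
    fix x assume "x \<in> F"
    then obtain i j where x: "x = (i,j)" "i<n" "j<n" "(j+n-i) mod n < 3"
      using Fmem by (cases x) auto
    then have "x = \<phi> (i, (j+n-i) mod n)" unfolding \<phi>_def using offs2 by simp
    then show "x \<in> \<phi> ` ({..<n} \<times> {..<3})" using x by auto
  next
    fix x assume "x \<in> \<phi> ` ({..<n} \<times> {..<3})"
    then obtain i k where x: "x = (i,(i+k) mod n)" "i<n" "k<3" unfolding \<phi>_def by auto
    then show "x \<in> F" using Fmem offs n3 by auto
  qed
  have inj: "inj_on \<phi> ({..<n} \<times> {..<3})"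
  proof (rule inj_onI)
    fix x y assume "x \<in> {..<n} \<times> {..<3}" "y \<in> {..<n} \<times> {..<3}" "\<phi> x = \<phi> y"
    then show "x = y" unfolding \<phi>_def using offs[of _ n] n3
      by (auto split: prod.splits) (metis less_le_trans)
  qed
  have valphi: "val (\<phi> (i,k)) = hv v (EE k i)" if "i<n" "k<3" for i k
    using that offs[of i n k] n3 unfolding val_def \<phi>_def A_def AA_def by auto
  have Rrow: "{j. j<n \<and> (i,j) \<in> F} = (\<lambda>k. (i+k) mod n) ` {..<3}" if "i<n" for i
    using F_eq that unfolding \<phi>_def by auto
  have injrow: "inj_on (\<lambda>k. (i+k) mod n) {..<3}" if "i<n" for i
    using offs[of i n] that n3 by (intro inj_onI) (metis lessThan_iff less_le_trans)
  have Ccol: "{i. i<n \<and> (i,j) \<in> F} = (\<lambda>k. (j+n-k) mod n) ` {..<3}" if "j<n" for j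
  proof (rule Set.set_eqI, rule iffI)
    fix i assume "i \<in> {i. i<n \<and> (i,j) \<in> F}"
    then have i: "i<n" "(j+n-i) mod n < 3" using Fmem that by auto
    then have "i = (j+n-(j+n-i) mod n) mod n" using offs3[of j n i] that by simp
    then show "i \<in> (\<lambda>k. (j+n-k) mod n) ` {..<3}" using i by auto
  next
    fix i assume "i \<in> (\<lambda>k. (j+n-k) mod n) ` {..<3}"
    then obtain k where k: "k<3" "i = (j+n-k) mod n" by auto
    have "(j + n - i) mod n = k" using k offs3[of j n k] that n3 by simp
    then show "i \<in> {i. i<n \<and> (i,j) \<in> F}" using Fmem k that n3 by auto
  qed
  have injcol: "inj_on (\<lambda>k. (j+n-k) mod n) {..<3}" if "j<n" for j
    using offs3[of j n] that n3 by (intro inj_onI) (metis lessThan_iff less_le_trans)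
  have valcol: "val ((j+n-k) mod n, j) = hv v (EE k ((j+n-k) mod n))" if "j<n" "k<3" for j k
  proof -
    have "(j + n - (j+n-k) mod n) mod n = k" using offs3[of j n k] that n3 by simp
    then show ?thesis using that n3 unfolding val_def A_def AA_def by auto
  qed
  have rowcard: "card {j. j<n \<and> (i,j) \<in> F} = 3" if "i<n" for i
    using Rrow[OF that] injrow[OF that] by (simp add: card_image)
  have colcard: "card {i. i<n \<and> (i,j) \<in> F} = 3" if "j<n" for j
    using Ccol[OF that] injcol[OF that] by (simp add: card_image)
  have rowsum: "(\<Sum>j\<in>{j. j<n \<and> (i,j) \<in> F}. val (i,j)) mod v = 0" if "i<n" for i
  proof -
    have "(\<Sum>j\<in>{j. j<n \<and> (i,j) \<in> F}. val (i,j)) = (\<Sum>k<3. val (i, (i+k) mod n))"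
      unfolding Rrow[OF that] by (subst sum.reindex[OF injrow[OF that]]) simp
    also have "\<dots> = (\<Sum>k<3. hv v (EE k i))"
      using valphi that unfolding \<phi>_def by (intro sum.cong) auto
    finally show ?thesis using hv3[OF vpos, of "EE 0 i" "EE 1 i" "EE 2 i"]
      by (simp add: sum3 EE_def)
  qed
  have colsum: "(\<Sum>i\<in>{i. i<n \<and> (i,j) \<in> F}. val (i,j)) mod v = 0" if "j<n" for j
  proof -
    have "(\<Sum>i\<in>{i. i<n \<and> (i,j) \<in> F}. val (i,j)) = (\<Sum>k<3. val ((j+n-k) mod n, j))"
      unfolding Ccol[OF that] by (subst sum.reindex[OF injcol[OF that]]) simp
    also have "\<dots> = (\<Sum>k<3. hv v (EE k ((j+n-k) mod n)))"
      using valcol that by (intro sum.cong) auto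
    finally have eq: "(\<Sum>i\<in>{i. i<n \<and> (i,j) \<in> F}. val (i,j)) =
        hv v (EE 0 j) + hv v (EE 1 ((j+n-1) mod n)) + hv v (EE 2 ((j+n-2) mod n))"
      using that by (simp add: sum3)
    define a where "a = (j+n-1) mod n"
    define b where "b = (j+n-2) mod n"
    have d1: "int v dvd 8 * int a - 8 * int (j+n-1)" unfolding a_def by (rule a[OF vdvd])
    have d2: "int v dvd 8 * int b - 8 * int (j+n-2)" unfolding b_def by (rule a[OF vdvd])
    have i1: "int (j+n-1) = int j + int n - 1" using n3 by simp
    have i2: "int (j+n-2) = int j + int n - 2" using n3 by simp
    have "EE 0 j + EE 1 a + EE 2 b = - (8 * int n) - 2 * (8 * int a - 8 * int (j+n-1))
       + (8 * int b - 8 * int (j+n-2))"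
      unfolding EE_def i1 i2 by (simp add: algebra_simps)
    moreover have "int v dvd - (8 * int n) - 2 * (8 * int a - 8 * int (j+n-1))
       + (8 * int b - 8 * int (j+n-2))"
      by (rule dvd_add[OF dvd_diff[OF iffD2[OF dvd_minus_iff vdvd] dvd_mult[OF d1]] d2])
    ultimately have "int v dvd EE 0 j + EE 1 a + EE 2 b" by simp
    from hv3[OF vpos this] show ?thesis unfolding eq a_def b_def .
  qed
  have cardsum: "(\<Sum>i<n. of_bool (P i) :: nat) = card {i. i<n \<and> P i}" for P
    by (simp add: sum_of_bool_eq Int_def)
  have cnt: "count (\<Sum>c\<in>F. {# val c, (v - val c) mod v #}) g =
      (\<Sum>k<(3::nat). card {i. i<n \<and> EE k i mod int v = int g}
                    + card {i. i<n \<and> (- EE k i) mod int v = int g})" (is "_ = ?rhs") for g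
  proof -
    have "count (\<Sum>c\<in>F. {# val c, (v - val c) mod v #}) g =
        (\<Sum>c\<in>F. of_bool (val c = g) + of_bool ((v - val c) mod v = g))"
      unfolding count_sum count2 ..
    also have "\<dots> = (\<Sum>x\<in>{..<n} \<times> {..<3}. of_bool (val (\<phi> x) = g) + of_bool ((v - val (\<phi> x)) mod v = g))"
      unfolding F_eq by (subst sum.reindex[OF inj]) simp
    also have "\<dots> = (\<Sum>(i,k)\<in>{..<n} \<times> {..<3}. of_bool (EE k i mod int v = int g)
                    + of_bool ((- EE k i) mod int v = int g))"
    proof (rule sum.cong[OF refl])
      fix x assume "x \<in> {..<n} \<times> {..<(3::nat)}"
      then obtain i k where x: "x = (i,k)" "i<n" "k<3" by blast
      have pt: "of_bool (val (\<phi> (i,k)) = g) + of_bool ((v - val (\<phi> (i,k))) mod v = g) =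
         (of_bool (EE k i mod int v = int g) + of_bool ((- EE k i) mod int v = int g) :: nat)"
      proof -
        have e1: "(val (\<phi> (i,k)) = g) = (EE k i mod int v = int g)"
          using valphi[OF x(2,3)] hv_eq[OF vpos] by simp
        have e2: "((v - val (\<phi> (i,k))) mod v = g) = ((- EE k i) mod int v = int g)"
          using valphi[OF x(2,3)] hv_neg[OF vpos] hv_eq[OF vpos] by simp
        show ?thesis by (simp only: e1 e2)
      qed
      show "(of_bool (val (\<phi> x) = g) + of_bool ((v - val (\<phi> x)) mod v = g) :: nat) =
         (case x of (i,k) \<Rightarrow> of_bool (EE k i mod int v = int g) + of_bool ((- EE k i) mod int v = int g))"
        unfolding x(1) prod.case by (rule pt)
    qed
    also have "\<dots> = (\<Sum>i<n. \<Sum>k<(3::nat). of_bool (EE k i mod int v = int g)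
                    + of_bool ((- EE k i) mod int v = int g))"
      by (simp add: sum.cartesian_product)
    also have "\<dots> = (\<Sum>k<(3::nat). \<Sum>i<n. of_bool (EE k i mod int v = int g)
                    + of_bool ((- EE k i) mod int v = int g))"
      by (rule sum.swap)
    also have "\<dots> = ?rhs"
      by (simp add: sum.distrib cardsum)
    finally show ?thesis .
  qed
  have vJ: "v div w = 4" using v4 wpos by simp
  have final: "count (\<Sum>c\<in>F. {# val c, (v - val c) mod v #}) g
      = (if g \<in> subgroup_J v w then 0 else lam)" if gv: "g < v" for g
  proof -
    have J: "g \<in> subgroup_J v w \<longleftrightarrow> 4 dvd g" unfolding subgroup_J_def vJ using gv by simp
    have m8: "int g mod 8 = 0 \<or> int g mod 8 = 1 \<or> int g mod 8 = 2 \<or> int g mod 8 = 3 \<or>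
      int g mod 8 = 4 \<or> int g mod 8 = 5 \<or> int g mod 8 = 6 \<or> int g mod 8 = 7" by presburger
    have d8: "4 dvd g \<longleftrightarrow> int g mod 8 = 0 \<or> int g mod 8 = 4" by presburger
    have m4: "int g mod 4 = 0 \<or> int g mod 4 = 1 \<or> int g mod 4 = 2 \<or> int g mod 4 = 3" by presburger
    have d4: "4 dvd g \<longleftrightarrow> int g mod 4 = 0" by presburger
    show ?thesis
    proof (cases "odd lam")
      case True
      have ln: "lam dvd n" using assms(1,4) True
        by (metis coprime_dvd_mult_right_iff coprime_left_2_iff_odd coprime_commute)
      define e where "e = n div lam"
      have ne: "n = lam * e" using ln unfolding e_def by simp
      have eo: "odd e" using ne assms(1) by simp
      have epos: "e > 0" using eo by (cases e) auto
      have we: "w = 2*e" using lw ne assms(3) by simp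
      have ve: "v = 8*e" using v4 we by simp
      have cp1: "coprime (1::int) (int e)" by simp
      have cpm1: "coprime (-1::int) (int e)" by simp
      have cp2: "coprime (2::int) (int e)" using eo by (simp add: coprime_left_2_iff_odd)
      have cpm2: "coprime (-2::int) (int e)" using cp2 by (simp add: coprime_minus_left_iff)
      have K: "(8::nat) > 0" by simp
      have c0: "card {i. i<n \<and> EE 0 i mod int v = int g} = (if int g mod int 8 = 1 mod int 8 then lam else 0)"
        by (rule count_lin2[OF epos K cp1 gv ve ne]) (simp add: EE_def)
      have c0': "card {i. i<n \<and> (- EE 0 i) mod int v = int g} = (if int g mod int 8 = (-1) mod int 8 then lam else 0)"
        by (rule count_lin2[OF epos K cpm1 gv ve ne]) (simp add: EE_def)
      have c1: "card {i. i<n \<and> EE 1 i mod int v = int g} = (if int g mod int 8 = (-6) mod int 8 then lam else 0)"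
        by (rule count_lin2[OF epos K cpm2 gv ve ne]) (simp add: EE_def)
      have c1': "card {i. i<n \<and> (- EE 1 i) mod int v = int g} = (if int g mod int 8 = 6 mod int 8 then lam else 0)"
        by (rule count_lin2[OF epos K cp2 gv ve ne]) (simp add: EE_def)
      have c2: "card {i. i<n \<and> EE 2 i mod int v = int g} = (if int g mod int 8 = 5 mod int 8 then lam else 0)"
        by (rule count_lin2[OF epos K cp1 gv ve ne]) (simp add: EE_def)
      have c2': "card {i. i<n \<and> (- EE 2 i) mod int v = int g} = (if int g mod int 8 = (-5) mod int 8 then lam else 0)"
        by (rule count_lin2[OF epos K cpm1 gv ve ne]) (simp add: EE_def)
      show ?thesis unfolding cnt sum3 c0 c0' c1 c1' c2 c2' J d8
        using m8 by (elim disjE) simp_all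
    next
      case False
      then obtain d where ld: "lam = 2*d" by auto
      have dn: "d dvd n" using assms(4) ld by simp
      define e where "e = n div d"
      have ne: "n = d * e" using dn unfolding e_def by simp
      have eo: "odd e" using ne assms(1) by simp
      have epos: "e > 0" using eo by (cases e) auto
      have we: "w = e" using lw ne ld assms(3) by simp
      have ve: "v = 4*e" using v4 we by simp
      have cp2: "coprime (2::int) (int e)" using eo by (simp add: coprime_left_2_iff_odd)
      have cpm2: "coprime (-2::int) (int e)" using cp2 by (simp add: coprime_minus_left_iff)
      have cp4: "coprime (4::int) (int e)" using cp2
        by (metis coprime_mult_left_iff mult_2 numeral_Bit0 numeral_times_numeral semiring_norm(12))
      have cpm4: "coprime (-4::int) (int e)" using cp4 by (simp add: coprime_minus_left_iff)
      have K: "(4::nat) > 0" by simp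
      have c0: "card {i. i<n \<and> EE 0 i mod int v = int g} = (if int g mod int 4 = 1 mod int 4 then d else 0)"
        by (rule count_lin2[OF epos K cp2 gv ve ne]) (simp add: EE_def)
      have c0': "card {i. i<n \<and> (- EE 0 i) mod int v = int g} = (if int g mod int 4 = (-1) mod int 4 then d else 0)"
        by (rule count_lin2[OF epos K cpm2 gv ve ne]) (simp add: EE_def)
      have c1: "card {i. i<n \<and> EE 1 i mod int v = int g} = (if int g mod int 4 = (-6) mod int 4 then d else 0)"
        by (rule count_lin2[OF epos K cpm4 gv ve ne]) (simp add: EE_def)
      have c1': "card {i. i<n \<and> (- EE 1 i) mod int v = int g} = (if int g mod int 4 = 6 mod int 4 then d else 0)"
        by (rule count_lin2[OF epos K cp4 gv ve ne]) (simp add: EE_def)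
      have c2: "card {i. i<n \<and> EE 2 i mod int v = int g} = (if int g mod int 4 = 5 mod int 4 then d else 0)"
        by (rule count_lin2[OF epos K cp2 gv ve ne]) (simp add: EE_def)
      have c2': "card {i. i<n \<and> (- EE 2 i) mod int v = int g} = (if int g mod int 4 = (-5) mod int 4 then d else 0)"
        by (rule count_lin2[OF epos K cpm2 gv ve ne]) (simp add: EE_def)
      show ?thesis unfolding cnt sum3 c0 c0' c1 c1' c2 c2' J d4 ld
        using m4 by (elim disjE) simp_all
    qed
  qed
  have w3: "2*n*3 div lam = 3*w"
  proof -
    have "2*n*3 = lam * (3*w)" using lw by simp
    then show ?thesis using assms(3) by simp
  qed
  have valbound: "\<forall>c\<in>F. val c < v"
  proof
    fix c assume "c \<in> F"
    then obtain i k where c: "c = \<phi> (i,k)" "i<n" "k<3" unfolding F_eq by auto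
    show "val c < v" unfolding c(1) valphi[OF c(2,3)] hv_def using vpos
      by (simp add: nat_less_iff)
  qed
  have "relative_heffter lam w n n 3 3 A"
    unfolding relative_heffter_def Let_def
    apply (fold v_def)
    apply (fold F_def)
    apply (fold val_def)
    apply (intro conjI)
    subgoal using assms(2) by simp
    subgoal using assms(2) by simp
    subgoal by simp
    subgoal by simp
    subgoal using assms(3) .
    subgoal using wpos .
    subgoal using dvd_mult2[OF assms(4), of 3] .
    subgoal using w3 by simp
    subgoal using valbound .
    subgoal using rowcard by blast
    subgoal using colcard by blast
    subgoal using final by blast
    subgoal using rowsum by blast
    subgoal using colsum by blast
    done
  then show ?thesis unfolding w_def by blast
qed

end
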